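(* For every $\epsilon$, the class $\mathbf{RMM}_\epsilon$ is closed under complement, under inverse homomorphisms and under word quotients. That is, if $L\subseteq\Sigma^*$ belongs to $\mathbf{RMM}_\epsilon$, then so do $\Sigma^*\setminus L$, $h^{-1}(L)=\{x\in\Sigma^*: h(x)\in L\}$ for every monoid homomorphism $h:\Sigma^*\to\Sigma^*$, and $w^{-1}L=\{x: wx\in L\}$ and $Lw^{-1}=\{x: xw\in L\}$ for every $w\in\Sigma^*$.
   Context: A measure-many quantum finite automaton (MM-QFA) over a finite alphabet $\Sigma$ is a tuple $M=(Q,\Sigma,\{U_\sigma\}_{\sigma\in\Sigma\cup\{\$\}},q_0,Q_{acc},Q_{rej})$, where $Q$ is a finite set of states indexing an orthonormal basis $\{|q\rangle\}$ of $\mathbb{C}^Q$, $\$\notin\Sigma$ is an end-marker, each $U_\sigma$ is unitary, $q_0$ is the initial state, and $Q$ is partitioned into accepting halting states $Q_{acc}$, rejecting halting states $Q_{rej}$ and non-halting states $Q_{non}$; let $P_{acc},P_{rej},P_{non}$ be the orthogonal projections onto the spans of the corresponding basis vectors. On input $x\in\Sigma^*$ the machine processes the symbols of $x\$$ one at a time, maintaining a triple $(\psi,p_{acc},p_{rej})$ initialised to $(|q_0\rangle,0,0)$: on reading $\sigma$ it sets $\psi'=U_\sigma\psi$, adds $\|P_{acc}\psi'\|^2$ to $p_{acc}$ and $\|P_{rej}\psi'\|^2$ to $p_{rej}$, and replaces $\psi$ by $P_{non}\psi'$. The acceptance probability $p_M(x)$ is the final value of $p_{acc}$. $M$ accepts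 $L$ with cut-point $\lambda$ and margin $\epsilon>0$ if $p_M(x)>\lambda+\epsilon$ for $x\in L$ and $p_M(x)<\lambda-\epsilon$ for $x\notin L$. $\mathbf{RMM}_\epsilon$ is the class of languages accepted by some MM-QFA (with some cut-point) with margin at least $\epsilon$. *)

theory Defs
  imports Complex_Main
begin

text \<open>The alphabet is a finite type 'a;
the end-marker is None, a letter s is Some s.  The state set Q is {0..<dim M},
vectors are functions nat => complex (only indices < dim M matter), and the
unitaries are dim x dim complex matrices given as functions.\<close>

record 'a mmqfa =
  dim  :: nat
  umat :: "'a option \<Rightarrow> nat \<Rightarrow> nat \<Rightarrow> complex"
  init :: nat
  Qacc :: "nat set"
  Qrej :: "nat set"

definition unitary_on :: "nat \<Rightarrow> (nat \<Rightarrow> nat \<Rightarrow> complex) \<Rightarrow> bool" where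
  "unitary_on n U \<longleftrightarrow>
     (\<forall>i<n. \<forall>j<n. (\<Sum>k<n. cnj (U k i) * U k j) = (if i = j then 1 else 0))"

definition wf_mmqfa :: "'a mmqfa \<Rightarrow> bool" where
  "wf_mmqfa M \<longleftrightarrow> init M < dim M \<and> Qacc M \<subseteq> {..<dim M} \<and> Qrej M \<subseteq> {..<dim M}
     \<and> Qacc M \<inter> Qrej M = {} \<and> (\<forall>\<sigma>. unitary_on (dim M) (umat M \<sigma>))"

definition mm_step :: "'a mmqfa \<Rightarrow> (nat \<Rightarrow> complex) \<times> real \<times> real \<Rightarrow> 'a option
                        \<Rightarrow> (nat \<Rightarrow> complex) \<times> real \<times> real" where
  "mm_step M st \<sigma> =
     (let (\<psi>, pa, pr) = st;
          \<psi>' = (\<lambda>i. \<Sum>j<dim M. umat M \<sigma> i j * \<psi> j)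
      in ((\<lambda>i. if i < dim M \<and> i \<notin> Qacc M \<and> i \<notin> Qrej M then \<psi>' i else 0),
          pa + (\<Sum>i\<in>Qacc M. (cmod (\<psi>' i))\<^sup>2),
          pr + (\<Sum>i\<in>Qrej M. (cmod (\<psi>' i))\<^sup>2)))"

definition acc_prob :: "'a mmqfa \<Rightarrow> 'a list \<Rightarrow> real" where
  "acc_prob M x =
     fst (snd (foldl (mm_step M) ((\<lambda>i. if i = init M then 1 else 0), 0, 0)
                     (map Some x @ [None])))"

definition accepts_with :: "'a mmqfa \<Rightarrow> 'a list set \<Rightarrow> real \<Rightarrow> real \<Rightarrow> bool" where
  "accepts_with M L c \<epsilon> \<longleftrightarrow> \<epsilon> > 0 \<and>
     (\<forall>x. (x \<in> L \<longrightarrow> acc_prob M x > c + \<epsilon>) \<and> (x \<notin> L \<longrightarrow> acc_prob M x < c - \<epsilon>))"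

definition RMM :: "real \<Rightarrow> ('a::finite) list set set" where
  "RMM \<epsilon> = {L. \<exists>M c \<epsilon>'. wf_mmqfa M \<and> \<epsilon>' \<ge> \<epsilon> \<and> accepts_with M L c \<epsilon>'}"

definition monoid_hom :: "('a list \<Rightarrow> 'a list) \<Rightarrow> bool" where
  "monoid_hom h \<longleftrightarrow> h [] = [] \<and> (\<forall>x y. h (x @ y) = h x @ h y)"

end

theory Submission
  imports Defs
begin

type_synonym cmat = "nat \<Rightarrow> nat \<Rightarrow> complex"
type_synonym cvec = "nat \<Rightarrow> complex"

definition mv :: "nat \<Rightarrow> cmat \<Rightarrow> cvec \<Rightarrow> cvec" where
  "mv n A x i = (\<Sum>j<n. A i j * x j)"

definition mmul :: "nat \<Rightarrow> cmat \<Rightarrow> cmat \<Rightarrow> cmat" where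
  "mmul n A B i j = (\<Sum>k<n. A i k * B k j)"

definition idm :: cmat where "idm i j = (if i = j then 1 else 0)"

lemma sum_delta1: "finite A \<Longrightarrow> (\<Sum>j\<in>A. (if i = j then 1 else 0) * (f j :: complex)) = (if i \<in> A then f i else 0)"
  by (simp add: if_distrib[of "\<lambda>t. t * _"] cong: if_cong)
lemma sum_delta2: "finite A \<Longrightarrow> (\<Sum>j\<in>A. (f j :: complex) * (if j = i then 1 else 0)) = (if i \<in> A then f i else 0)"
  by (simp add: if_distrib[of "\<lambda>t. _ * t"] cong: if_cong)
lemma sum_delta3: "finite A \<Longrightarrow> (\<Sum>j\<in>A. (f j :: complex) * (if i = j then 1 else 0)) = (if i \<in> A then f i else 0)"
  by (simp add: if_distrib[of "\<lambda>t. _ * t"] cong: if_cong)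
lemma sum_delta4: "finite A \<Longrightarrow> (\<Sum>j\<in>A. (if j = i then 1 else 0) * (f j :: complex)) = (if i \<in> A then f i else 0)"
  by (simp add: if_distrib[of "\<lambda>t. t * _"] cong: if_cong)

definition nxt :: "'a mmqfa \<Rightarrow> cvec \<Rightarrow> 'a option \<Rightarrow> cvec" where
  "nxt M \<psi> \<sigma> = (\<lambda>i. if i < dim M \<and> i \<notin> Qacc M \<and> i \<notin> Qrej M then mv (dim M) (umat M \<sigma>) \<psi> i else 0)"
definition ainc :: "'a mmqfa \<Rightarrow> cvec \<Rightarrow> 'a option \<Rightarrow> real" where
  "ainc M \<psi> \<sigma> = (\<Sum>i\<in>Qacc M. (cmod (mv (dim M) (umat M \<sigma>) \<psi> i))\<^sup>2)"
definition rinc :: "'a mmqfa \<Rightarrow> cvec \<Rightarrow> 'a option \<Rightarrow> real" where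
  "rinc M \<psi> \<sigma> = (\<Sum>i\<in>Qrej M. (cmod (mv (dim M) (umat M \<sigma>) \<psi> i))\<^sup>2)"

lemma mm_step_eq: "mm_step M (\<psi>, a, b) \<sigma> = (nxt M \<psi> \<sigma>, a + ainc M \<psi> \<sigma>, b + rinc M \<psi> \<sigma>)"
  by (simp add: mm_step_def nxt_def ainc_def rinc_def mv_def fun_eq_iff)

fun runfin :: "'a mmqfa \<Rightarrow> cvec \<Rightarrow> 'a option list \<Rightarrow> cvec" where
  "runfin M \<psi> [] = \<psi>" | "runfin M \<psi> (\<sigma>#xs) = runfin M (nxt M \<psi> \<sigma>) xs"
fun runacc :: "'a mmqfa \<Rightarrow> cvec \<Rightarrow> 'a option list \<Rightarrow> real" where
  "runacc M \<psi> [] = 0" | "runacc M \<psi> (\<sigma>#xs) = ainc M \<psi> \<sigma> + runacc M (nxt M \<psi> \<sigma>) xs"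
fun runrej :: "'a mmqfa \<Rightarrow> cvec \<Rightarrow> 'a option list \<Rightarrow> real" where
  "runrej M \<psi> [] = 0" | "runrej M \<psi> (\<sigma>#xs) = rinc M \<psi> \<sigma> + runrej M (nxt M \<psi> \<sigma>) xs"

lemma foldl_eq: "foldl (mm_step M) (\<psi>, a, b) xs = (runfin M \<psi> xs, a + runacc M \<psi> xs, b + runrej M \<psi> xs)"
  by (induction xs arbitrary: \<psi> a b) (simp_all add: mm_step_eq algebra_simps)

definition e0 :: "nat \<Rightarrow> cvec" where "e0 k = (\<lambda>i. if i = k then 1 else 0)"


lemma runfin_append: "runfin M \<psi> (xs @ ys) = runfin M (runfin M \<psi> xs) ys"
  by (induction xs arbitrary: \<psi>) auto
lemma runacc_append: "runacc M \<psi> (xs @ ys) = runacc M \<psi> xs + runacc M (runfin M \<psi> xs) ys"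
  by (induction xs arbitrary: \<psi>) auto
lemma runrej_append: "runrej M \<psi> (xs @ ys) = runrej M \<psi> xs + runrej M (runfin M \<psi> xs) ys"
  by (induction xs arbitrary: \<psi>) auto

lemma acc_prob_eq: "acc_prob M x = runacc M (e0 (init M)) (map Some x @ [None])"
proof -
  have "(\<lambda>i. if i = init M then 1 else 0) = e0 (init M)" by (simp add: e0_def fun_eq_iff)
  then show ?thesis by (simp add: acc_prob_def foldl_eq del: foldl_append)
qed

lemma ainc_nonneg: "ainc M \<psi> \<sigma> \<ge> 0" by (simp add: ainc_def sum_nonneg)
lemma rinc_nonneg: "rinc M \<psi> \<sigma> \<ge> 0" by (simp add: rinc_def sum_nonneg)
lemma runacc_nonneg: "runacc M \<psi> xs \<ge> 0"
  by (induction xs arbitrary: \<psi>) (auto intro!: add_nonneg_nonneg ainc_nonneg)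
lemma runrej_nonneg: "runrej M \<psi> xs \<ge> 0"
  by (induction xs arbitrary: \<psi>) (auto intro!: add_nonneg_nonneg rinc_nonneg)

lemma mv_mmul: "mv n (mmul n A B) x = mv n A (mv n B x)"
proof
  fix i
  show "mv n (mmul n A B) x i = mv n A (mv n B x) i"
  proof -
  have "mv n (mmul n A B) x i = (\<Sum>j<n. \<Sum>k<n. A i k * B k j * x j)"
    by (simp add: mv_def mmul_def sum_distrib_right)
  also have "\<dots> = (\<Sum>k<n. \<Sum>j<n. A i k * (B k j * x j))"
    by (subst sum.swap) (simp add: mult.assoc)
  also have "\<dots> = mv n A (mv n B x) i"
    by (simp add: mv_def sum_distrib_left)
  finally show ?thesis .
  qed
qed

lemma mv_cong: "(\<And>j. j < n \<Longrightarrow> x j = y j) \<Longrightarrow> mv n A x = mv n A y"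
  by (simp add: mv_def fun_eq_iff)

lemma mv_idm: "i < n \<Longrightarrow> mv n idm x i = x i"
  by (simp add: mv_def idm_def sum_delta1)

lemma unitary_idm: "unitary_on n idm"
  unfolding unitary_on_def idm_def
proof (intro allI impI)
  fix i j assume "i < n" "j < n"
  have "(\<Sum>k<n. cnj (if i = k then 1 else 0) * (if k = j then 1 else (0::complex)))
     = (\<Sum>k<n. (if i = k then 1 else 0) * (if k = j then 1 else (0::complex)))"
    by (rule sum.cong) auto
  also have "\<dots> = (if i = j then 1 else 0)" using \<open>i < n\<close> by (simp add: sum_delta1)
  finally show "(\<Sum>k<n. cnj (if k = i then 1 else 0) * (if k = j then 1 else (0::complex))) = (if i = j then 1 else 0)"
    by (simp add: eq_commute[of i])
qed

lemma unitary_mmul: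
  assumes A: "unitary_on n A" and B: "unitary_on n B"
  shows "unitary_on n (mmul n A B)"
  unfolding unitary_on_def
proof (intro allI impI)
  fix i j assume i: "i < n" and j: "j < n"
  have "(\<Sum>k<n. cnj (mmul n A B k i) * mmul n A B k j)
      = (\<Sum>k<n. \<Sum>l<n. \<Sum>m<n. cnj (B l i) * B m j * (cnj (A k l) * A k m))"
    by (simp add: mmul_def sum_distrib_left sum_distrib_right mult_ac)
  also have "\<dots> = (\<Sum>l<n. \<Sum>m<n. cnj (B l i) * B m j * (\<Sum>k<n. cnj (A k l) * A k m))"
    by (simp add: sum_distrib_left, subst sum.swap, rule sum.cong, simp, subst sum.swap, simp)
  also have "\<dots> = (\<Sum>l<n. \<Sum>m<n. cnj (B l i) * B m j * (if l = m then 1 else 0))"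
    using A by (simp add: unitary_on_def)
  also have "\<dots> = (\<Sum>l<n. cnj (B l i) * B l j)"
    by (simp add: sum_delta2 sum_delta3)
  also have "\<dots> = (if i = j then 1 else 0)"
    using B i j by (simp add: unitary_on_def)
  finally show "(\<Sum>k<n. cnj (mmul n A B k i) * mmul n A B k j) = (if i = j then 1 else 0)" .
qed

lemma norm_pres:
  assumes U: "unitary_on n U"
  shows "(\<Sum>i<n. (cmod (mv n U x i))\<^sup>2) = (\<Sum>j<n. (cmod (x j))\<^sup>2)"
proof -
  have sq: "complex_of_real ((cmod z)\<^sup>2) = cnj z * z" for z
    using complex_norm_square[of z] by (simp add: mult.commute)
  have "complex_of_real (\<Sum>i<n. (cmod (mv n U x i))\<^sup>2)
      = (\<Sum>i<n. \<Sum>j<n. \<Sum>k<n. cnj (x j) * x k * (cnj (U i j) * U i k))"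
    unfolding of_real_sum sq by (simp add: mv_def sum_distrib_left sum_distrib_right mult_ac)
  also have "\<dots> = (\<Sum>j<n. \<Sum>k<n. cnj (x j) * x k * (\<Sum>i<n. cnj (U i j) * U i k))"
    by (simp add: sum_distrib_left, subst sum.swap, rule sum.cong, simp, subst sum.swap, simp)
  also have "\<dots> = (\<Sum>j<n. \<Sum>k<n. cnj (x j) * x k * (if j = k then 1 else 0))"
    using U by (simp add: unitary_on_def)
  also have "\<dots> = (\<Sum>j<n. cnj (x j) * x j)"
    by (simp add: sum_delta2 sum_delta3)
  also have "\<dots> = complex_of_real (\<Sum>j<n. (cmod (x j))\<^sup>2)"
    unfolding of_real_sum sq ..
  finally show ?thesis by (simp only: of_real_eq_iff)
qed


definition nrm :: "nat \<Rightarrow> cvec \<Rightarrow> real" where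
  "nrm n \<psi> = (\<Sum>i<n. (cmod (\<psi> i))\<^sup>2)"

lemma sum_if_lt: "(\<Sum>i<(n::nat). if P i then f i else 0) = sum f {i. i < n \<and> P i}"
proof -
  have "(\<Sum>i<(n::nat). if P i then f i else 0) = sum f {i\<in>{..<n}. P i}" by (rule sym, rule sum.inter_filter) simp
  also have "{i\<in>{..<n}. P i} = {i. i < n \<and> P i}" by auto
  finally show ?thesis .
qed

lemma sum_split3:
  fixes f :: "nat \<Rightarrow> real"
  assumes "A \<subseteq> {..<n}" "B \<subseteq> {..<n}" "A \<inter> B = {}"
  shows "(\<Sum>i<n. f i) = sum f A + sum f B + (\<Sum>i<n. if i \<notin> A \<and> i \<notin> B then f i else 0)"
proof -
  let ?R = "{i\<in>{..<n}. i \<notin> A \<and> i \<notin> B}"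
  have fin: "finite A" "finite B" using finite_subset[OF assms(1)] finite_subset[OF assms(2)] by auto
  have "{..<n} = (A \<union> B) \<union> ?R" using assms by auto
  then have "(\<Sum>i<n. f i) = sum f ((A \<union> B) \<union> ?R)" by (rule arg_cong[where f="sum f"])
  also have "\<dots> = sum f (A \<union> B) + sum f ?R"
    using fin by (intro sum.union_disjoint) auto
  also have "sum f (A \<union> B) = sum f A + sum f B"
    using fin assms by (simp add: sum.union_disjoint)
  also have "sum f ?R = (\<Sum>i<n. if i \<notin> A \<and> i \<notin> B then f i else 0)"
    by (rule sum.inter_filter) simp
  finally show ?thesis .
qed

lemma step_cons:
  assumes wf: "wf_mmqfa M"
  shows "ainc M \<psi> \<sigma> + rinc M \<psi> \<sigma> + nrm (dim M) (nxt M \<psi> \<sigma>) = nrm (dim M) \<psi>"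
proof -
  let ?n = "dim M" let ?u = "mv (dim M) (umat M \<sigma>) \<psi>"
  have U: "unitary_on ?n (umat M \<sigma>)" using wf by (simp add: wf_mmqfa_def)
  have "nrm ?n \<psi> = (\<Sum>i<?n. (cmod (?u i))\<^sup>2)" using norm_pres[OF U] by (simp add: nrm_def)
  also have "\<dots> = ainc M \<psi> \<sigma> + rinc M \<psi> \<sigma> + (\<Sum>i<?n. if i \<notin> Qacc M \<and> i \<notin> Qrej M then (cmod (?u i))\<^sup>2 else 0)"
  proof -
    have h: "Qacc M \<subseteq> {..<dim M}" "Qrej M \<subseteq> {..<dim M}" "Qacc M \<inter> Qrej M = {}"
      using wf by (simp_all add: wf_mmqfa_def)
    show ?thesis unfolding ainc_def rinc_def by (rule sum_split3[OF h])
  qed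
  also have "(\<Sum>i<?n. if i \<notin> Qacc M \<and> i \<notin> Qrej M then (cmod (?u i))\<^sup>2 else 0) = nrm ?n (nxt M \<psi> \<sigma>)"
    unfolding nrm_def nxt_def by (rule sum.cong) auto
  finally show ?thesis by simp
qed

lemma run_cons:
  assumes wf: "wf_mmqfa M"
  shows "runacc M \<psi> xs + runrej M \<psi> xs + nrm (dim M) (runfin M \<psi> xs) = nrm (dim M) \<psi>"
proof (induction xs arbitrary: \<psi>)
  case Nil then show ?case by simp
next
  case (Cons \<sigma> xs)
  have "runacc M \<psi> (\<sigma>#xs) + runrej M \<psi> (\<sigma>#xs) + nrm (dim M) (runfin M \<psi> (\<sigma>#xs))
     = ainc M \<psi> \<sigma> + rinc M \<psi> \<sigma> + (runacc M (nxt M \<psi> \<sigma>) xs + runrej M (nxt M \<psi> \<sigma>) xs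
        + nrm (dim M) (runfin M (nxt M \<psi> \<sigma>) xs))" by simp
  also have "\<dots> = nrm (dim M) \<psi>" using Cons step_cons[OF wf] by simp
  finally show ?case .
qed

lemma nrm_e0: "k < n \<Longrightarrow> nrm n (e0 k) = 1"
  by (simp add: nrm_def e0_def if_distrib[of "\<lambda>t. (cmod t)\<^sup>2"] cong: if_cong)

lemma nrm_nonneg: "nrm n \<psi> \<ge> 0" by (simp add: nrm_def sum_nonneg)

definition flipM :: "'a mmqfa \<Rightarrow> 'a mmqfa" where
  "flipM M = M\<lparr>Qacc := Qrej M, Qrej := Qacc M\<rparr>"

lemma flip_simps[simp]: "dim (flipM M) = dim M" "umat (flipM M) = umat M" "init (flipM M) = init M"
  "Qacc (flipM M) = Qrej M" "Qrej (flipM M) = Qacc M"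
  by (simp_all add: flipM_def)

lemma flip_nxt: "nxt (flipM M) = nxt M"
  by (auto simp: nxt_def fun_eq_iff)

lemma flip_runfin: "runfin (flipM M) \<psi> xs = runfin M \<psi> xs"
  by (induction xs arbitrary: \<psi>) (simp_all add: flip_nxt)

lemma flip_runacc: "runacc (flipM M) \<psi> xs = runrej M \<psi> xs"
  by (induction xs arbitrary: \<psi>) (simp_all add: flip_nxt ainc_def rinc_def)

lemma flip_wf: "wf_mmqfa M \<Longrightarrow> wf_mmqfa (flipM M)"
  by (auto simp: wf_mmqfa_def)

definition extm :: "nat \<Rightarrow> cmat \<Rightarrow> cmat" where
  "extm n U i j = (if i < n \<and> j < n then U i j else idm i j)"

lemma sum_lt_restrict:
  fixes n N :: nat
  assumes "n \<le> N"
  shows "(\<Sum>j<N. if j < n then f j else 0) = (\<Sum>j<n. (f j :: 'b::comm_monoid_add))"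
proof -
  have "(\<Sum>j<N. if j < n then f j else 0) = (\<Sum>j<n. if j < n then f j else 0)"
    using assms by (intro sum.mono_neutral_right) auto
  then show ?thesis by simp
qed

lemma mv_extm:
  assumes "n \<le> N" "i < N"
  shows "mv N (extm n U) y i = (if i < n then mv n U y i else y i)"
proof (cases "i < n")
  case True
  have "mv N (extm n U) y i = (\<Sum>j<N. if j < n then U i j * y j else 0)"
    unfolding mv_def extm_def idm_def using True by (intro sum.cong) auto
  also have "\<dots> = mv n U y i" using assms by (simp add: sum_lt_restrict mv_def)
  finally show ?thesis using True by simp
next
  case False
  have "mv N (extm n U) y i = (\<Sum>j<N. (if i = j then 1 else 0) * y j)"
    unfolding mv_def extm_def idm_def using False by (intro sum.cong) auto
  also have "\<dots> = y i" using assms by (simp add: sum_delta1)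
  finally show ?thesis using False by simp
qed

lemma unitary_extm:
  assumes "n \<le> N" and U: "unitary_on n U"
  shows "unitary_on N (extm n U)"
  unfolding unitary_on_def
proof (intro allI impI)
  fix i j assume i: "i < N" and j: "j < N"
  show "(\<Sum>k<N. cnj (extm n U k i) * extm n U k j) = (if i = j then 1 else 0)"
  proof (cases "i < n")
    case True
    have "(\<Sum>k<N. cnj (extm n U k i) * extm n U k j) = (\<Sum>k<N. if k < n then cnj (U k i) * extm n U k j else 0)"
      unfolding extm_def idm_def using True by (intro sum.cong) auto
    also have "\<dots> = (\<Sum>k<n. cnj (U k i) * extm n U k j)" using assms by (simp add: sum_lt_restrict)
    also have "\<dots> = (if i = j then 1 else 0)"
    proof (cases "j < n")
      case True
      then show ?thesis using \<open>i < n\<close> U by (simp add: extm_def unitary_on_def)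
    next
      case False
      then show ?thesis using \<open>i < n\<close> by (simp add: extm_def idm_def)
    qed
    finally show ?thesis .
  next
    case False
    have "(\<Sum>k<N. cnj (extm n U k i) * extm n U k j) = (\<Sum>k<N. (if k = i then 1 else 0) * extm n U k j)"
      unfolding extm_def idm_def using False by (intro sum.cong) auto
    also have "\<dots> = extm n U i j" using i by (simp add: sum_delta4)
    also have "\<dots> = (if i = j then 1 else 0)" using False by (simp add: extm_def idm_def)
    finally show ?thesis .
  qed
qed

definition pm :: "(nat \<Rightarrow> nat) \<Rightarrow> cmat" where
  "pm \<pi> i j = (if j = \<pi> i then 1 else 0)"

lemma mv_pm: "\<pi> i < N \<Longrightarrow> mv N (pm \<pi>) y i = y (\<pi> i)"
  by (simp add: mv_def pm_def sum_delta4)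

lemma unitary_pm:
  assumes inv: "\<And>i. i < N \<Longrightarrow> \<pi> i < N \<and> \<pi> (\<pi> i) = i"
  shows "unitary_on N (pm \<pi>)"
  unfolding unitary_on_def
proof (intro allI impI)
  fix i j assume i: "i < N" and j: "j < N"
  have "(\<Sum>k<N. cnj (pm \<pi> k i) * pm \<pi> k j) = (\<Sum>k<N. (if k = \<pi> i then 1 else 0) * pm \<pi> k j)"
  proof (intro sum.cong refl)
    fix k assume "k \<in> {..<N}"
    then have k: "k < N" by simp
    have a: "\<pi> (\<pi> k) = k" "\<pi> (\<pi> i) = i" using inv[OF k] inv[OF i] by simp_all
    have "(i = \<pi> k) = (k = \<pi> i)"
    proof
      assume "i = \<pi> k" then show "k = \<pi> i" using a(1) by simp
    next
      assume "k = \<pi> i" then show "i = \<pi> k" using a(2) by simp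
    qed
    then show "cnj (pm \<pi> k i) * pm \<pi> k j = (if k = \<pi> i then 1 else 0) * pm \<pi> k j"
      unfolding pm_def by simp
  qed
  also have "\<dots> = pm \<pi> (\<pi> i) j" using inv[OF i] by (simp add: sum_delta4)
  also have "\<dots> = (if i = j then 1 else 0)"
  proof -
    have "\<pi> (\<pi> i) = i" using inv[OF i] by simp
    then show ?thesis by (auto simp: pm_def)
  qed
  finally show "(\<Sum>k<N. cnj (pm \<pi> k i) * pm \<pi> k j) = (if i = j then 1 else 0)" .
qed

definition sw :: "nat \<Rightarrow> nat \<Rightarrow> nat set \<Rightarrow> nat \<Rightarrow> nat" where
  "sw n b A i = (if i < n \<and> i \<in> A then b + i else if b \<le> i \<and> i < b + n \<and> i - b \<in> A then i - b else i)"

lemma sw_inv: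
  assumes "n \<le> b" "b + n \<le> N" "i < N"
  shows "sw n b A i < N \<and> sw n b A (sw n b A i) = i"
proof (cases "i < n \<and> i \<in> A")
  case True
  have 1: "sw n b A i = b + i" using True by (simp add: sw_def)
  have "\<not> b + i < n" "b \<le> b + i" "b + i < b + n" "b + i - b \<in> A" using True assms by auto
  then have "sw n b A (b + i) = i" by (simp add: sw_def)
  then show ?thesis using 1 True assms by simp
next
  case F1: False
  show ?thesis
  proof (cases "b \<le> i \<and> i < b + n \<and> i - b \<in> A")
    case True
    then have "\<not> i < n" using assms by simp
    then have 1: "sw n b A i = i - b" using F1 True by (simp add: sw_def)
    have "i - b < n" "i - b \<in> A" using True by linarith+
    then have "sw n b A (i - b) = b + (i - b)" by (simp add: sw_def)
    also have "\<dots> = i" using True by simp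
    finally show ?thesis using 1 assms by simp
  next
    case False
    have "sw n b A i = i" unfolding sw_def by (simp only: if_not_P[OF F1] if_not_P[OF False])
    then show ?thesis using assms by simp
  qed
qed

lemma unitary_sw:
  assumes "n \<le> b" "b + n \<le> N"
  shows "unitary_on N (pm (sw n b A))"
  using sw_inv[OF assms] by (intro unitary_pm) auto


definition Hs :: "'a mmqfa \<Rightarrow> nat set" where "Hs M = Qacc M \<union> Qrej M"

fun vm :: "'a mmqfa \<Rightarrow> nat \<Rightarrow> nat \<Rightarrow> 'a option list \<Rightarrow> cmat" where
  "vm M N t [] = idm"
| "vm M N t (w#ws) = mmul N (vm M N (Suc t) ws)
     (mmul N (pm (sw (dim M) (dim M * t) (Hs M))) (extm (dim M) (umat M w)))"

lemma unitary_vm: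
  assumes wf: "wf_mmqfa M" and "1 \<le> t" and "dim M * (t + length ws) \<le> N"
  shows "unitary_on N (vm M N t ws)"
  using assms(2,3)
proof (induction ws arbitrary: t)
  case Nil then show ?case by (simp add: unitary_idm)
next
  case (Cons w ws)
  let ?n = "dim M"
  have a: "?n * (Suc t + length ws) \<le> N" using Cons.prems by simp
  have b: "?n \<le> ?n * t" using Cons.prems by simp
  have c: "?n * t + ?n \<le> N" using Cons.prems by (simp add: algebra_simps)
  have d: "?n \<le> N" using b c by simp
  have U: "unitary_on ?n (umat M w)" using wf by (simp add: wf_mmqfa_def)
  show ?case
    using Cons.IH[OF _ a] unitary_sw[OF b c] unitary_extm[OF d U]
    by (simp add: unitary_mmul)
qed

lemma vm_sem:
  assumes wf: "wf_mmqfa M" and n: "n = dim M" and t1: "1 \<le> t"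
    and tl: "t + length ws \<le> B + 1" and NB: "n * (B + 1) \<le> N"
    and y0: "\<forall>i<n. y i = \<phi> i"
    and yz: "\<forall>t' q. t \<le> t' \<longrightarrow> t' \<le> B \<longrightarrow> q < n \<longrightarrow> y (n * t' + q) = 0"
  shows "(\<forall>i<n. mv N (vm M N t ws) y i = runfin M \<phi> ws i)
    \<and> (\<forall>j<N. n \<le> j \<longrightarrow> (j < n * t \<or> n * (t + length ws) \<le> j) \<longrightarrow> mv N (vm M N t ws) y j = y j)
    \<and> (\<forall>t' q. t \<le> t' \<longrightarrow> t' < t + length ws \<longrightarrow> q < n \<longrightarrow> q \<notin> Hs M \<longrightarrow> mv N (vm M N t ws) y (n * t' + q) = 0)
    \<and> (\<Sum>t'\<in>{t..<t + length ws}. \<Sum>q\<in>Qacc M. (cmod (mv N (vm M N t ws) y (n * t' + q)))\<^sup>2) = runacc M \<phi> ws"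
  using t1 tl y0 yz
proof (induction ws arbitrary: t \<phi> y)
  case Nil
  have nN: "n \<le> N" using NB by (simp add: algebra_simps)
  have z: "\<And>j. j < N \<Longrightarrow> mv N (vm M N t []) y j = y j" by (simp add: mv_idm)
  show ?case using Nil.prems nN z by auto
next
  case (Cons w ws)
  let ?U = "umat M w"
  let ?H = "Hs M"
  let ?u = "mv n ?U \<phi>"
  define e where "e = mv N (extm n ?U) y"
  define y1 where "y1 = mv N (pm (sw n (n * t) ?H)) e"
  define \<phi>1 where "\<phi>1 = nxt M \<phi> w"
  have t1: "1 \<le> t" and tl: "t + Suc (length ws) \<le> B + 1" using Cons.prems by auto
  have tB: "t \<le> B" using tl by simp
  then have ntB: "n * t + n \<le> n * B + n" using mult_le_mono2[of t B n] by simp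
  have BN: "n * B + n \<le> N" using NB by (simp add: algebra_simps)
  have nnt: "n \<le> n * t" using t1 by simp
  have ntN: "n * t + n \<le> N" using ntB BN by linarith
  have nN: "n \<le> N" using nnt ntN by simp
  have HQ: "Qacc M \<subseteq> ?H" "?H \<subseteq> {..<n}" using wf n by (auto simp: Hs_def wf_mmqfa_def)
  have zdef: "mv N (vm M N t (w#ws)) y = mv N (vm M N (Suc t) ws) y1"
    by (simp add: mv_mmul y1_def e_def n)
  have e_lo: "e i = ?u i" if "i < n" for i
  proof -
    have "e i = mv n ?U y i" using that nN by (simp add: e_def mv_extm)
    also have "\<dots> = ?u i" using mv_cong[of n y \<phi> ?U] Cons.prems(3) by simp
    finally show ?thesis .
  qed
  have e_hi: "e j = y j" if "n \<le> j" "j < N" for j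
    using that by (simp add: e_def mv_extm)
  have y1_sw: "y1 j = e (sw n (n * t) ?H j)" if "j < N" for j
    using sw_inv[OF nnt ntN that] by (simp add: y1_def mv_pm)
  have y1_lo: "y1 i = \<phi>1 i" if "i < n" for i
  proof (cases "i \<in> ?H")
    case True
    have "y1 i = e (n * t + i)" using y1_sw[of i] that True nN by (simp add: sw_def)
    also have "\<dots> = y (n * t + i)" using e_hi[of "n * t + i"] that ntN nnt by simp
    also have "\<dots> = 0" using Cons.prems(4) tB that by simp
    finally show ?thesis using True by (auto simp: \<phi>1_def nxt_def Hs_def)
  next
    case False
    have "\<not> n * t \<le> i" using that nnt by linarith
    then have "y1 i = e i" using y1_sw[of i] that False nN by (simp add: sw_def)
    then show ?thesis using False that e_lo by (simp add: \<phi>1_def nxt_def Hs_def n)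
  qed
  have y1_blk: "y1 (n * t + q) = (if q \<in> ?H then ?u q else 0)" if "q < n" for q
  proof -
    have sw1: "sw n (n * t) ?H (n * t + q) = (if q \<in> ?H then q else n * t + q)"
    proof -
      have "\<not> n * t + q < n" using nnt by linarith
      then show ?thesis using that by (simp add: sw_def)
    qed
    have "y1 (n * t + q) = e (if q \<in> ?H then q else n * t + q)"
      using y1_sw[of "n * t + q"] sw1 that ntN by simp
    also have "\<dots> = (if q \<in> ?H then ?u q else 0)"
      using e_lo[OF that] e_hi[of "n * t + q"] that ntN nnt Cons.prems(4) tB by auto
    finally show ?thesis .
  qed
  have y1_other: "y1 j = y j" if "j < N" "n \<le> j" "j < n * t \<or> n * t + n \<le> j" for j
  proof -
    have "sw n (n * t) ?H j = j" using that by (auto simp: sw_def)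
    then show ?thesis using y1_sw[OF that(1)] e_hi[OF that(2,1)] by simp
  qed
  have IHpre4: "\<forall>t' q. Suc t \<le> t' \<longrightarrow> t' \<le> B \<longrightarrow> q < n \<longrightarrow> y1 (n * t' + q) = 0"
  proof (intro allI impI)
    fix t' q assume a: "Suc t \<le> t'" "t' \<le> B" "q < n"
    have f1: "n * Suc t \<le> n * t'" by (rule mult_le_mono2) (use a in simp)
    have f2: "n * t' \<le> n * B" by (rule mult_le_mono2) (use a in simp)
    have f3: "n * Suc t = n * t + n" by simp
    have "n * t' + q < N" "n \<le> n * t' + q" "n * t + n \<le> n * t' + q"
      using f1 f2 f3 BN nnt a(3) by linarith+
    then have "y1 (n * t' + q) = y (n * t' + q)" by (intro y1_other) auto
    also have "\<dots> = 0" using Cons.prems(4) a by simp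
    finally show "y1 (n * t' + q) = 0" .
  qed
  have IH: "(\<forall>i<n. mv N (vm M N (Suc t) ws) y1 i = runfin M \<phi>1 ws i)
    \<and> (\<forall>j<N. n \<le> j \<longrightarrow> (j < n * Suc t \<or> n * (Suc t + length ws) \<le> j) \<longrightarrow> mv N (vm M N (Suc t) ws) y1 j = y1 j)
    \<and> (\<forall>t' q. Suc t \<le> t' \<longrightarrow> t' < Suc t + length ws \<longrightarrow> q < n \<longrightarrow> q \<notin> Hs M \<longrightarrow> mv N (vm M N (Suc t) ws) y1 (n * t' + q) = 0)
    \<and> (\<Sum>t'\<in>{Suc t..<Suc t + length ws}. \<Sum>q\<in>Qacc M. (cmod (mv N (vm M N (Suc t) ws) y1 (n * t' + q)))\<^sup>2) = runacc M \<phi>1 ws"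
    by (rule Cons.IH[where t="Suc t" and \<phi>=\<phi>1 and y=y1]) (use tl y1_lo IHpre4 in auto)
  let ?z = "mv N (vm M N (Suc t) ws) y1"
  note IH1 = conjunct1[OF IH]
  note IH2 = conjunct1[OF conjunct2[OF IH]]
  note IH3 = conjunct1[OF conjunct2[OF conjunct2[OF IH]]]
  note IH4 = conjunct2[OF conjunct2[OF conjunct2[OF IH]]]
  have zblk: "?z (n * t + q) = y1 (n * t + q)" if "q < n" for q
  proof -
    have e: "n * Suc t = n * t + n" by simp
    have "n * t + q < N" "n \<le> n * t + q" "n * t + q < n * Suc t" using that ntN nnt e by linarith+
    then show ?thesis using IH2 by blast
  qed
  have c1: "\<forall>i<n. mv N (vm M N t (w#ws)) y i = runfin M \<phi> (w#ws) i"
    using IH1 unfolding zdef by (simp add: \<phi>1_def)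
  have c2: "\<forall>j<N. n \<le> j \<longrightarrow> (j < n * t \<or> n * (t + length (w#ws)) \<le> j) \<longrightarrow> mv N (vm M N t (w#ws)) y j = y j"
  proof (intro allI impI)
    fix j assume j: "j < N" "n \<le> j" "j < n * t \<or> n * (t + length (w#ws)) \<le> j"
    then have "j < n * Suc t \<or> n * (Suc t + length ws) \<le> j" by auto
    then have "?z j = y1 j" using IH2 j by blast
    also have "\<dots> = y j" using j by (intro y1_other) (auto simp: algebra_simps)
    finally show "mv N (vm M N t (w#ws)) y j = y j" unfolding zdef .
  qed
  have c3: "\<forall>t' q. t \<le> t' \<longrightarrow> t' < t + length (w#ws) \<longrightarrow> q < n \<longrightarrow> q \<notin> Hs M \<longrightarrow> mv N (vm M N t (w#ws)) y (n * t' + q) = 0"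
  proof (intro allI impI)
    fix t' q assume a: "t \<le> t'" "t' < t + length (w#ws)" "q < n" "q \<notin> Hs M"
    show "mv N (vm M N t (w#ws)) y (n * t' + q) = 0"
    proof (cases "t' = t")
      case True
      then show ?thesis using zblk[OF a(3)] y1_blk[OF a(3)] a(4) unfolding zdef by simp
    next
      case False
      then have "Suc t \<le> t'" "t' < Suc t + length ws" using a by simp_all
      then show ?thesis using IH3 a unfolding zdef by simp
    qed
  qed
  have blk: "(\<Sum>q\<in>Qacc M. (cmod (?z (n * t + q)))\<^sup>2) = ainc M \<phi> w"
  proof -
    have "(\<Sum>q\<in>Qacc M. (cmod (?z (n * t + q)))\<^sup>2) = (\<Sum>q\<in>Qacc M. (cmod (?u q))\<^sup>2)"
    proof (rule sum.cong[OF refl])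
      fix q assume q: "q \<in> Qacc M"
      then have "q < n" "q \<in> ?H" using HQ by auto
      then show "(cmod (?z (n * t + q)))\<^sup>2 = (cmod (?u q))\<^sup>2" using zblk y1_blk by simp
    qed
    then show ?thesis by (simp add: ainc_def n)
  qed
  have "{t..<t + length (w#ws)} = insert t {Suc t..<Suc t + length ws}" by auto
  then have c4: "(\<Sum>t'\<in>{t..<t + length (w#ws)}. \<Sum>q\<in>Qacc M. (cmod (mv N (vm M N t (w#ws)) y (n * t' + q)))\<^sup>2)
      = runacc M \<phi> (w#ws)"
    using IH4 blk unfolding zdef by (simp add: \<phi>1_def)
  show ?case using c1 c2 c3 c4 by blast
qed


definition multi :: "'a mmqfa \<Rightarrow> nat \<Rightarrow> ('b option \<Rightarrow> 'a option list) \<Rightarrow> ('b option \<Rightarrow> bool) \<Rightarrow> 'b mmqfa" where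
  "multi M K f D = \<lparr>dim = dim M * (K + 2) + 2,
     umat = (\<lambda>\<sigma>. mmul (dim M * (K + 2) + 2)
        (if D \<sigma> then pm (sw (dim M) (dim M * (K + 1)) {i. i < dim M \<and> i \<notin> Hs M}) else idm)
        (vm M (dim M * (K + 2) + 2) 1 (f \<sigma>))),
     init = init M,
     Qacc = (\<Union>t\<in>{1..K}. (\<lambda>q. dim M * t + q) ` Qacc M) \<union> (\<lambda>q. dim M * (K + 1) + q) ` {i. i < dim M \<and> i \<notin> Hs M},
     Qrej = (\<Union>t\<in>{1..K}. (\<lambda>q. dim M * t + q) ` Qrej M)\<rparr>"

lemma multi_simps:
  "dim (multi M K f D) = dim M * (K + 2) + 2"
  "init (multi M K f D) = init M"
  "umat (multi M K f D) \<sigma> = mmul (dim M * (K + 2) + 2)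
        (if D \<sigma> then pm (sw (dim M) (dim M * (K + 1)) {i. i < dim M \<and> i \<notin> Hs M}) else idm)
        (vm M (dim M * (K + 2) + 2) 1 (f \<sigma>))"
  "Qacc (multi M K f D) = (\<Union>t\<in>{1..K}. (\<lambda>q. dim M * t + q) ` Qacc M) \<union> (\<lambda>q. dim M * (K + 1) + q) ` {i. i < dim M \<and> i \<notin> Hs M}"
  "Qrej (multi M K f D) = (\<Union>t\<in>{1..K}. (\<lambda>q. dim M * t + q) ` Qrej M)"
  by (simp_all add: multi_def)

lemma blk_inj:
  fixes n t t' q q' :: nat
  assumes "q < n" "q' < n" "n * t + q = n * t' + q'"
  shows "t = t' \<and> q = q'"
proof -
  have n0: "n \<noteq> 0" using assms by auto
  have "(q + n * t) div n = t" "(q' + n * t') div n = t'" using n0 assms by simp_all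
  then have "t = t'" using assms by (metis add.commute)
  then show ?thesis using assms by simp
qed

lemma sum_blocks:
  fixes h :: "nat \<Rightarrow> real"
  assumes "finite T" "finite S" "\<forall>q\<in>S. q < n"
  shows "sum h (\<Union>t\<in>T. (\<lambda>q. n * t + q) ` S) = (\<Sum>t\<in>T. \<Sum>q\<in>S. h (n * t + q))"
proof -
  have "sum h (\<Union>t\<in>T. (\<lambda>q. n * t + q) ` S) = (\<Sum>t\<in>T. sum h ((\<lambda>q. n * t + q) ` S))"
  proof (rule sum.UNION_disjoint)
    show "finite T" by fact
    show "\<forall>t\<in>T. finite ((\<lambda>q. n * t + q) ` S)" using assms by simp
    show "\<forall>t\<in>T. \<forall>t'\<in>T. t \<noteq> t' \<longrightarrow> (\<lambda>q. n * t + q) ` S \<inter> (\<lambda>q. n * t' + q) ` S = {}"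
      using assms(3) blk_inj by blast
  qed
  also have "\<dots> = (\<Sum>t\<in>T. \<Sum>q\<in>S. h (n * t + q))"
    by (rule sum.cong[OF refl]) (simp add: sum.reindex inj_on_def)
  finally show ?thesis .
qed

lemma wf_pos: "wf_mmqfa M \<Longrightarrow> 0 < dim M"
  by (auto simp: wf_mmqfa_def)

lemma wf_multi:
  assumes wf: "wf_mmqfa M" and fl: "\<And>\<sigma>. length (f \<sigma>) \<le> K"
  shows "wf_mmqfa (multi M K f D)"
proof -
  let ?n = "dim M" let ?N = "dim M * (K + 2) + 2"
  have n0: "0 < ?n" using wf by (rule wf_pos)
  have HM: "Qacc M \<subseteq> {..<?n}" "Qrej M \<subseteq> {..<?n}" "Qacc M \<inter> Qrej M = {}" "init M < ?n"
    using wf by (auto simp: wf_mmqfa_def)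
  have bnd: "?n * t + q < ?N" if "t \<le> K + 1" "q < ?n" for t q
  proof -
    have "?n * t \<le> ?n * (K + 1)" by (rule mult_le_mono2) (use that in simp)
    moreover have "?n * (K + 2) = ?n * (K + 1) + ?n" by (simp add: algebra_simps)
    ultimately show ?thesis using that by linarith
  qed
  have U: "unitary_on ?N (umat (multi M K f D) \<sigma>)" for \<sigma>
  proof -
    have "?n * (1 + length (f \<sigma>)) \<le> ?n * (K + 2)" by (rule mult_le_mono2) (use fl[of \<sigma>] in simp)
    then have v: "unitary_on ?N (vm M ?N 1 (f \<sigma>))" by (intro unitary_vm[OF wf]) auto
    have a: "?n \<le> ?n * (K + 1)" by simp
    have b: "?n * (K + 1) + ?n \<le> ?N" by (simp add: algebra_simps)
    have "unitary_on ?N (if D \<sigma> then pm (sw ?n (?n * (K + 1)) {i. i < ?n \<and> i \<notin> Hs M}) else idm)"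
      using unitary_sw[OF a b] unitary_idm by simp
    then show ?thesis using v by (simp add: multi_simps unitary_mmul)
  qed
  have acc_sub: "Qacc (multi M K f D) \<subseteq> {..<?N}"
  proof
    fix j assume "j \<in> Qacc (multi M K f D)"
    then show "j \<in> {..<?N}"
    proof (unfold multi_simps, elim UnE)
      assume "j \<in> (\<Union>t\<in>{1..K}. (\<lambda>q. ?n * t + q) ` Qacc M)"
      then obtain t q where "t \<le> K" "q \<in> Qacc M" "j = ?n * t + q" by auto
      moreover then have "q < ?n" using HM by auto
      ultimately show ?thesis using bnd[of t q] by simp
    next
      assume "j \<in> (\<lambda>q. ?n * (K + 1) + q) ` {i. i < ?n \<and> i \<notin> Hs M}"
      then obtain q where "q < ?n" "j = ?n * (K + 1) + q" by blast
      then show ?thesis using bnd[of "K + 1" q] by simp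
    qed
  qed
  have rej_sub: "Qrej (multi M K f D) \<subseteq> {..<?N}"
  proof
    fix j assume "j \<in> Qrej (multi M K f D)"
    then obtain t q where "t \<le> K" "q \<in> Qrej M" "j = ?n * t + q" unfolding multi_simps by auto
    moreover then have "q < ?n" using HM by auto
    ultimately show "j \<in> {..<?N}" using bnd[of t q] by simp
  qed
  have disj: "Qacc (multi M K f D) \<inter> Qrej (multi M K f D) = {}"
  proof (rule ccontr)
    assume "Qacc (multi M K f D) \<inter> Qrej (multi M K f D) \<noteq> {}"
    then obtain j where ja: "j \<in> Qacc (multi M K f D)" and jr: "j \<in> Qrej (multi M K f D)" by blast
    from jr obtain t' q' where t': "t' \<in> {1..K}" "q' \<in> Qrej M" "j = ?n * t' + q'"
      unfolding multi_simps by blast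
    have q'n: "q' < ?n" using t' HM by auto
    from ja show False
    proof (unfold multi_simps, elim UnE)
      assume "j \<in> (\<Union>t\<in>{1..K}. (\<lambda>q. ?n * t + q) ` Qacc M)"
      then obtain t q where "q \<in> Qacc M" "j = ?n * t + q" by blast
      moreover then have "q < ?n" using HM by auto
      ultimately have "q = q'" using t' q'n blk_inj[of q ?n q' t t'] by simp
      then show False using \<open>q \<in> Qacc M\<close> t'(2) HM(3) by blast
    next
      assume "j \<in> (\<lambda>q. ?n * (K + 1) + q) ` {i. i < ?n \<and> i \<notin> Hs M}"
      then obtain q where "q < ?n" "j = ?n * (K + 1) + q" by blast
      then have "K + 1 = t'" using t' q'n blk_inj[of q ?n q' "K + 1" t'] by simp
      then show False using t'(1) by simp
    qed
  qed
  show ?thesis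
    unfolding wf_mmqfa_def using U acc_sub rej_sub disj HM
    by (simp add: multi_simps)
qed


definition Rc :: "nat \<Rightarrow> nat \<Rightarrow> complex \<Rightarrow> cvec \<Rightarrow> cvec \<Rightarrow> bool" where
  "Rc n K c \<phi> \<psi>' \<longleftrightarrow> (\<forall>j<n * (K + 2) + 2. \<psi>' j = (if j < n then \<phi> j else if j = n * (K + 2) + 1 then c else 0))"

lemma multi_halt_range:
  assumes wf: "wf_mmqfa M" and n: "n = dim M"
    and j: "j \<in> Qacc (multi M K f D) \<or> j \<in> Qrej (multi M K f D)"
  shows "n \<le> j \<and> j < n * (K + 2)"
proof -
  have HM: "Qacc M \<subseteq> {..<n}" "Qrej M \<subseteq> {..<n}" using wf n by (auto simp: wf_mmqfa_def)
  have bnd: "n \<le> n * t + q \<and> n * t + q < n * (K + 2)" if "1 \<le> t" "t \<le> K + 1" "q < n" for t q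
  proof -
    have a: "n * 1 \<le> n * t" "n * t \<le> n * (K + 1)" by (rule mult_le_mono2, use that in simp)+
    have "n \<le> n * t" using a(1) by (simp only: mult_1_right)
    moreover have "n * (K + 2) = n * (K + 1) + n" by (simp add: algebra_simps)
    ultimately show ?thesis using that a(2) by linarith
  qed
  have ex: "\<exists>t q. 1 \<le> t \<and> t \<le> K + 1 \<and> q < n \<and> j = n * t + q"
  proof (cases "j \<in> Qacc (multi M K f D)")
    case True
    then have "j \<in> (\<Union>t\<in>{1..K}. (\<lambda>q. dim M * t + q) ` Qacc M) \<or> j \<in> (\<lambda>q. dim M * (K + 1) + q) ` {i. i < dim M \<and> i \<notin> Hs M}"
      by (simp add: multi_simps)
    then show ?thesis
    proof (elim disjE)
      assume "j \<in> (\<Union>t\<in>{1..K}. (\<lambda>q. dim M * t + q) ` Qacc M)"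
      then obtain t q where "t \<in> {1..K}" "q \<in> Qacc M" "j = n * t + q" using n by blast
      moreover then have "q < n" using HM by auto
      ultimately show ?thesis by force
    next
      assume "j \<in> (\<lambda>q. dim M * (K + 1) + q) ` {i. i < dim M \<and> i \<notin> Hs M}"
      then obtain q where "q < n" "j = n * (K + 1) + q" using n by blast
      then show ?thesis by force
    qed
  next
    case False
    then have "j \<in> (\<Union>t\<in>{1..K}. (\<lambda>q. dim M * t + q) ` Qrej M)" using j by (simp add: multi_simps)
    then obtain t q where "t \<in> {1..K}" "q \<in> Qrej M" "j = n * t + q" using n by blast
    moreover then have "q < n" using HM by auto
    ultimately show ?thesis by force
  qed
  then obtain t q where tq: "1 \<le> t" "t \<le> K + 1" "q < n" "j = n * t + q" by blast
  then show ?thesis using bnd by simp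
qed

lemma multi_step:
  assumes wf: "wf_mmqfa M" and n: "n = dim M" and N: "N = n * (K + 2) + 2"
    and fl: "length (f \<sigma>) \<le> K" and Dne: "D \<sigma> \<Longrightarrow> f \<sigma> \<noteq> []"
    and R: "Rc n K c \<phi> \<psi>'"
  shows "ainc (multi M K f D) \<psi>' \<sigma> = runacc M \<phi> (f \<sigma>)
           + (if D \<sigma> then (\<Sum>i\<in>{i. i < n \<and> i \<notin> Hs M}. (cmod (runfin M \<phi> (f \<sigma>) i))\<^sup>2) else 0)"
    and "\<not> D \<sigma> \<Longrightarrow> Rc n K c (runfin M \<phi> (f \<sigma>)) (nxt (multi M K f D) \<psi>' \<sigma>)"
proof -
  define ws where "ws = f \<sigma>"
  define L where "L = length ws"
  define g where "g = n * (K + 2) + 1"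
  define z where "z = mv N (vm M N 1 ws) \<psi>'"
  define nonH where "nonH = {i. i < n \<and> i \<notin> Hs M}"
  define P where "P = (if D \<sigma> then pm (sw n (n * (K + 1)) nonH) else idm)"
  have n0: "0 < n" using wf_pos[OF wf] n by simp
  have LK: "L \<le> K" using fl by (simp add: L_def ws_def)
  have HM: "Qacc M \<subseteq> {..<n}" "Qrej M \<subseteq> {..<n}" using wf n by (auto simp: wf_mmqfa_def)
  have R': "\<And>j. j < N \<Longrightarrow> \<psi>' j = (if j < n then \<phi> j else if j = g then c else 0)"
    using R by (simp add: Rc_def N g_def)
  have e2: "n * (K + 2) = n * (K + 1) + n" by (simp add: algebra_simps)
  have bnd: "n \<le> n * t + q \<and> n * t + q < n * (K + 2)" if "1 \<le> t" "t \<le> K + 1" "q < n" for t q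
  proof -
    have a: "n * 1 \<le> n * t" "n * t \<le> n * (K + 1)" by (rule mult_le_mono2, use that in simp)+
    have "n \<le> n * t" using a(1) by (simp only: mult_1_right)
    then show ?thesis using that e2 a(2) by linarith
  qed
  have yz: "\<forall>t' q. 1 \<le> t' \<longrightarrow> t' \<le> K + 1 \<longrightarrow> q < n \<longrightarrow> \<psi>' (n * t' + q) = 0"
  proof (intro allI impI)
    fix t' q assume a: "1 \<le> t'" "t' \<le> K + 1" "q < n"
    then have "n \<le> n * t' + q" "n * t' + q < n * (K + 2)" using bnd by auto
    then show "\<psi>' (n * t' + q) = 0" using R'[of "n * t' + q"] by (simp add: N g_def)
  qed
  have y0: "\<forall>i<n. \<psi>' i = \<phi> i" using R' N by simp

  have VS: "(\<forall>i<n. z i = runfin M \<phi> ws i)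
    \<and> (\<forall>j<N. n \<le> j \<longrightarrow> (j < n * 1 \<or> n * (1 + L) \<le> j) \<longrightarrow> z j = \<psi>' j)
    \<and> (\<forall>t' q. 1 \<le> t' \<longrightarrow> t' < 1 + L \<longrightarrow> q < n \<longrightarrow> q \<notin> Hs M \<longrightarrow> z (n * t' + q) = 0)
    \<and> (\<Sum>t'\<in>{1..<1 + L}. \<Sum>q\<in>Qacc M. (cmod (z (n * t' + q)))\<^sup>2) = runacc M \<phi> ws"
    unfolding z_def L_def
    by (rule vm_sem[OF wf n]) (use LK N y0 yz L_def in auto)
  note Z1 = conjunct1[OF VS]
  note Z2 = conjunct1[OF conjunct2[OF VS]]
  note Z3 = conjunct1[OF conjunct2[OF conjunct2[OF VS]]]
  note Z4 = conjunct2[OF conjunct2[OF conjunct2[OF VS]]]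
  have U: "z j = \<psi>' j" if "j < N" "n \<le> j" "n * (1 + L) \<le> j" for j
    using Z2 that by blast
  have nK: "n \<le> n * (K + 1)" by simp
  have nKN: "n * (K + 1) + n \<le> N" using N e2 by simp
  have Mdim: "dim (multi M K f D) = N" using N n by (simp add: multi_simps)
  have zP: "mv N (umat (multi M K f D) \<sigma>) \<psi>' = mv N P z"
    by (simp add: multi_simps P_def z_def ws_def nonH_def mv_mmul N n)
  have zP2: "mv N P z j = (if D \<sigma> then z (sw n (n * (K + 1)) nonH j) else z j)" if "j < N" for j
    using that sw_inv[OF nK nKN that] by (simp add: P_def mv_pm mv_idm)
  have blk_same: "mv N P z (n * t + q) = z (n * t + q)" if "1 \<le> t" "t \<le> K" "q < n" for t q
  proof -
    have "n * t \<le> n * K" by (rule mult_le_mono2) (use that in simp)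
    moreover have "n * (K + 1) = n * K + n" by simp
    ultimately have a: "n * t + q < n * (K + 1)" "n \<le> n * t + q" using that bnd[of t q] by linarith+
    then have "sw n (n * (K + 1)) nonH (n * t + q) = n * t + q" by (simp add: sw_def)
    moreover have "n * t + q < N" using a N e2 by linarith
    ultimately show ?thesis using zP2 by simp
  qed
  have nL: "n * (1 + L) \<le> n * t" if "1 + L \<le> t" for t by (rule mult_le_mono2) (use that in simp)
  let ?A1 = "(\<Union>t\<in>{1..K}. (\<lambda>q. n * t + q) ` Qacc M)"
  let ?A2 = "(\<lambda>q. n * (K + 1) + q) ` nonH"
  have Qa: "Qacc (multi M K f D) = ?A1 \<union> ?A2" by (simp add: multi_simps n nonH_def)
  have finQ: "finite (Qacc M)" using HM(1) finite_subset by blast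
  have finA: "finite ?A1" "finite ?A2" using finQ by (auto simp: nonH_def)
  have disjA: "?A1 \<inter> ?A2 = {}"
  proof (rule ccontr)
    assume "?A1 \<inter> ?A2 \<noteq> {}"
    then obtain t q q' where "t \<in> {1..K}" "q \<in> Qacc M" "q' \<in> nonH" "n * t + q = n * (K + 1) + q'" by blast
    moreover then have "q < n" "q' < n" using HM by (auto simp: nonH_def)
    ultimately show False using blk_inj[of q n q' t "K + 1"] by auto
  qed
  let ?h = "\<lambda>j. (cmod (mv N P z j))\<^sup>2"
  have ainc_eq: "ainc (multi M K f D) \<psi>' \<sigma> = sum ?h ?A1 + sum ?h ?A2"
    unfolding ainc_def Mdim zP Qa using finA disjA by (simp add: sum.union_disjoint)
  have s1: "sum ?h ?A1 = runacc M \<phi> ws"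
  proof -
    have "sum ?h ?A1 = (\<Sum>t\<in>{1..K}. \<Sum>q\<in>Qacc M. ?h (n * t + q))"
      using HM finQ by (intro sum_blocks) auto
    also have "\<dots> = (\<Sum>t\<in>{1..K}. \<Sum>q\<in>Qacc M. (cmod (z (n * t + q)))\<^sup>2)"
      using blk_same HM by (intro sum.cong refl) auto
    also have "\<dots> = (\<Sum>t\<in>{1..<1 + L}. \<Sum>q\<in>Qacc M. (cmod (z (n * t + q)))\<^sup>2)"
    proof (rule sum.mono_neutral_right)
      show "finite {1..K}" by simp
      show "{1..<1 + L} \<subseteq> {1..K}" using LK by auto
      show "\<forall>t\<in>{1..K} - {1..<1 + L}. (\<Sum>q\<in>Qacc M. (cmod (z (n * t + q)))\<^sup>2) = 0"
      proof
        fix t assume t: "t \<in> {1..K} - {1..<1 + L}"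
        show "(\<Sum>q\<in>Qacc M. (cmod (z (n * t + q)))\<^sup>2) = 0"
        proof (rule sum.neutral, rule ballI)
          fix q assume "q \<in> Qacc M"
          then have q: "q < n" using HM by auto
          have tt: "1 \<le> t" "t \<le> K + 1" "1 + L \<le> t" using t by auto
          have "z (n * t + q) = \<psi>' (n * t + q)"
            using U[of "n * t + q"] bnd[OF tt(1,2) q] nL[OF tt(3)] N by simp
          then show "(cmod (z (n * t + q)))\<^sup>2 = 0" using yz tt q by simp
        qed
      qed
    qed
    also have "\<dots> = runacc M \<phi> ws" using Z4 .
    finally show ?thesis .
  qed
  have s2: "sum ?h ?A2 = (if D \<sigma> then (\<Sum>i\<in>nonH. (cmod (runfin M \<phi> ws i))\<^sup>2) else 0)"
  proof -
    have "sum ?h ?A2 = (\<Sum>q\<in>nonH. ?h (n * (K + 1) + q))"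
      by (simp add: sum.reindex inj_on_def)
    also have "\<dots> = (\<Sum>q\<in>nonH. if D \<sigma> then (cmod (runfin M \<phi> ws q))\<^sup>2 else 0)"
    proof (rule sum.cong[OF refl])
      fix q assume q: "q \<in> nonH"
      then have qn: "q < n" by (simp add: nonH_def)
      have j: "n * (K + 1) + q < N" "n \<le> n * (K + 1) + q" using qn N e2 by simp_all
      have sw: "sw n (n * (K + 1)) nonH (n * (K + 1) + q) = q" using q qn by (simp add: sw_def)
      have "n * (1 + L) \<le> n * (K + 1)" by (rule mult_le_mono2) (use LK in simp)
      then have "n * (1 + L) \<le> n * (K + 1) + q" by linarith
      then have "z (n * (K + 1) + q) = \<psi>' (n * (K + 1) + q)" by (rule U[OF j(1,2)])
      then have zz: "z (n * (K + 1) + q) = 0"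
        using yz[rule_format, of "K + 1" q] qn by simp
      show "?h (n * (K + 1) + q) = (if D \<sigma> then (cmod (runfin M \<phi> ws q))\<^sup>2 else 0)"
        using zP2[OF j(1)] sw zz Z1 qn by simp
    qed
    also have "\<dots> = (if D \<sigma> then (\<Sum>i\<in>nonH. (cmod (runfin M \<phi> ws i))\<^sup>2) else 0)" by simp
    finally show ?thesis .
  qed
  show "ainc (multi M K f D) \<psi>' \<sigma> = runacc M \<phi> (f \<sigma>)
           + (if D \<sigma> then (\<Sum>i\<in>{i. i < n \<and> i \<notin> Hs M}. (cmod (runfin M \<phi> (f \<sigma>) i))\<^sup>2) else 0)"
    using ainc_eq s1 s2 by (simp add: ws_def nonH_def)
  assume nD: "\<not> D \<sigma>"
  have zz: "mv N P z j = z j" if "j < N" for j using zP2[OF that] nD by simp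
  show "Rc n K c (runfin M \<phi> (f \<sigma>)) (nxt (multi M K f D) \<psi>' \<sigma>)"
    unfolding Rc_def
  proof (intro allI impI)
    fix j assume jN0: "j < n * (K + 2) + 2"
    then have jN: "j < N" using N by simp
    have nx: "nxt (multi M K f D) \<psi>' \<sigma> j = (if j \<notin> Qacc (multi M K f D) \<and> j \<notin> Qrej (multi M K f D) then z j else 0)"
      using jN zz unfolding nxt_def Mdim zP by simp
    have hr: "j \<in> Qacc (multi M K f D) \<or> j \<in> Qrej (multi M K f D) \<Longrightarrow> n \<le> j \<and> j < n * (K + 2)"
      by (rule multi_halt_range[OF wf n])
    show "nxt (multi M K f D) \<psi>' \<sigma> j = (if j < n then runfin M \<phi> (f \<sigma>) j else if j = n * (K + 2) + 1 then c else 0)"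
    proof (cases "j < n")
      case True
      then show ?thesis using nx hr Z1 by (auto simp: ws_def)
    next
      case jn: False
      show ?thesis
      proof (cases "j = g")
        case True
        have "n * (1 + L) \<le> n * (K + 2)" by (rule mult_le_mono2) (use LK in simp)
        then have "z j = c" using U[OF jN] R'[OF jN] True jn by (simp add: g_def)
        then show ?thesis using nx hr True jn by (auto simp: g_def)
      next
        case jg: False
        have "z j = 0 \<or> j \<in> Qacc (multi M K f D) \<or> j \<in> Qrej (multi M K f D)"
        proof (cases "n * (1 + L) \<le> j")
          case True
          then show ?thesis using U[OF jN] R'[OF jN] jn jg by simp
        next
          case False
          define t where "t = j div n"
          define q where "q = j mod n"
          have jtq: "j = n * t + q" and qn: "q < n" using n0 by (simp_all add: t_def q_def)
          have t1: "1 \<le> t"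
          proof (rule ccontr)
            assume "\<not> 1 \<le> t" then have "t = 0" by simp
            then show False using jtq qn jn by simp
          qed
          have tL: "t < 1 + L"
          proof (rule ccontr)
            assume "\<not> t < 1 + L"
            then have "n * (1 + L) \<le> n * t" by (intro mult_le_mono2) simp
            then show False using False jtq by simp
          qed
          show ?thesis
          proof (cases "q \<in> Hs M")
            case True
            have tK: "t \<in> {1..K}" using t1 tL LK by simp
            show ?thesis
            proof (cases "q \<in> Qacc M")
              case True
              then have "j \<in> ?A1" using tK jtq by blast
              then show ?thesis using Qa by simp
            next
              case False
              then have "q \<in> Qrej M" using \<open>q \<in> Hs M\<close> by (simp add: Hs_def)
              then have "j \<in> (\<Union>t\<in>{1..K}. (\<lambda>q. n * t + q) ` Qrej M)" using tK jtq by blast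
              then show ?thesis by (simp add: multi_simps n)
            qed
          next
            case False
            then show ?thesis using Z3 t1 tL qn jtq by simp
          qed
        qed
        then show ?thesis using nx jn jg by (auto simp: g_def)
      qed
    qed
  qed
qed


lemma multi_sim:
  assumes wf: "wf_mmqfa M" and n: "n = dim M"
    and xs: "\<forall>\<sigma>\<in>set xs. \<not> D \<sigma> \<and> length (f \<sigma>) \<le> K"
    and R: "Rc n K c \<phi> \<psi>'"
  shows "runacc (multi M K f D) \<psi>' xs = runacc M \<phi> (concat (map f xs))
     \<and> Rc n K c (runfin M \<phi> (concat (map f xs))) (runfin (multi M K f D) \<psi>' xs)"
  using xs R
proof (induction xs arbitrary: \<phi> \<psi>')
  case Nil then show ?case by simp
next
  case (Cons \<sigma> xs)
  have nD: "\<not> D \<sigma>" and fl: "length (f \<sigma>) \<le> K" using Cons.prems by auto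
  have Dne: "D \<sigma> \<Longrightarrow> f \<sigma> \<noteq> []" using nD by simp
  have st1: "ainc (multi M K f D) \<psi>' \<sigma> = runacc M \<phi> (f \<sigma>)"
    using multi_step(1)[where M=M and n=n and N="n * (K + 2) + 2" and K=K and f=f and \<sigma>=\<sigma> and D=D and c=c and \<phi>=\<phi> and \<psi>'=\<psi>', OF wf n refl fl Dne Cons.prems(2)] nD by simp
  have st2: "Rc n K c (runfin M \<phi> (f \<sigma>)) (nxt (multi M K f D) \<psi>' \<sigma>)"
    using multi_step(2)[where M=M and n=n and N="n * (K + 2) + 2" and K=K and f=f and \<sigma>=\<sigma> and D=D and c=c and \<phi>=\<phi> and \<psi>'=\<psi>', OF wf n refl fl Dne Cons.prems(2)] nD by simp
  have IH: "runacc (multi M K f D) (nxt (multi M K f D) \<psi>' \<sigma>) xs = runacc M (runfin M \<phi> (f \<sigma>)) (concat (map f xs))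
     \<and> Rc n K c (runfin M (runfin M \<phi> (f \<sigma>)) (concat (map f xs))) (runfin (multi M K f D) (nxt (multi M K f D) \<psi>' \<sigma>) xs)"
    using Cons.IH[OF _ st2] Cons.prems(1) by simp
  show ?case using IH st1 by (simp add: runacc_append runfin_append)
qed

lemma Rc_init:
  assumes "k < n"
  shows "Rc n K 0 (e0 k) (e0 k)"
  using assms unfolding Rc_def e0_def by auto

lemma concat_single: "concat (map (\<lambda>\<sigma>. [\<sigma>]) xs) = xs"
  by (induction xs) auto

(* conjugation by a Householder reflection *)

definition hh :: "cvec \<Rightarrow> cmat" where
  "hh v i j = idm i j - v i * cnj (v j)"

definition conjM :: "'a mmqfa \<Rightarrow> nat \<Rightarrow> cvec \<Rightarrow> 'a mmqfa" where
  "conjM M1 s v = M1\<lparr>umat := (\<lambda>\<sigma>. mmul (dim M1) (hh v) (mmul (dim M1) (umat M1 \<sigma>) (hh v))), init := s\<rparr>"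

lemma conjM_simps[simp]:
  "dim (conjM M1 s v) = dim M1" "init (conjM M1 s v) = s"
  "Qacc (conjM M1 s v) = Qacc M1" "Qrej (conjM M1 s v) = Qrej M1"
  "umat (conjM M1 s v) \<sigma> = mmul (dim M1) (hh v) (mmul (dim M1) (umat M1 \<sigma>) (hh v))"
  by (simp_all add: conjM_def)

lemma unitary_hh:
  assumes S2: "(\<Sum>k<N. cnj (v k) * v k) = 2"
  shows "unitary_on N (hh v)"
  unfolding unitary_on_def
proof (intro allI impI)
  fix i j assume i: "i < N" and j: "j < N"
  have t: "cnj (hh v k i) * hh v k j = idm i k * idm k j - idm i k * (v k * cnj (v j))
      - v i * (cnj (v k) * idm k j) + v i * cnj (v j) * (cnj (v k) * v k)" for k
    by (simp add: hh_def idm_def algebra_simps)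
  have "(\<Sum>k<N. cnj (hh v k i) * hh v k j) = (\<Sum>k<N. idm i k * idm k j) - (\<Sum>k<N. idm i k * (v k * cnj (v j)))
      - (\<Sum>k<N. v i * (cnj (v k) * idm k j)) + (\<Sum>k<N. v i * cnj (v j) * (cnj (v k) * v k))"
    unfolding t by (simp add: sum.distrib sum_subtractf)
  also have "(\<Sum>k<N. idm i k * idm k j) = idm i j" using i by (simp add: idm_def sum_delta1)
  also have "(\<Sum>k<N. idm i k * (v k * cnj (v j))) = v i * cnj (v j)" using i by (simp add: idm_def sum_delta1)
  also have "(\<Sum>k<N. v i * (cnj (v k) * idm k j)) = v i * cnj (v j)"
    using j by (simp add: idm_def sum_delta2 flip: sum_distrib_left)
  also have "(\<Sum>k<N. v i * cnj (v j) * (cnj (v k) * v k)) = v i * cnj (v j) * 2"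
    using S2 by (simp flip: sum_distrib_left)
  finally show "(\<Sum>k<N. cnj (hh v k i) * hh v k j) = (if i = j then 1 else 0)"
    by (simp add: idm_def)
qed

lemma wf_conjM:
  assumes wf: "wf_mmqfa M1" and s: "s < dim M1" and S2: "(\<Sum>k<dim M1. cnj (v k) * v k) = 2"
  shows "wf_mmqfa (conjM M1 s v)"
  using wf s unitary_hh[OF S2] unfolding wf_mmqfa_def by (simp add: unitary_mmul)

lemma mv_hh:
  assumes "i < N"
  shows "mv N (hh v) y i = y i - v i * (\<Sum>j<N. cnj (v j) * y j)"
proof -
  have "mv N (hh v) y i = (\<Sum>j<N. idm i j * y j) - (\<Sum>j<N. v i * (cnj (v j) * y j))"
    unfolding mv_def hh_def by (simp add: algebra_simps sum_subtractf)
  also have "(\<Sum>j<N. idm i j * y j) = y i" using assms by (simp add: idm_def sum_delta1)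
  finally show ?thesis by (simp add: sum_distrib_left)
qed

lemma conj_step:
  assumes N: "N = dim M1" and S2: "(\<Sum>k<N. cnj (v k) * v k) = 2"
    and vH: "\<forall>j. j \<in> Qacc M1 \<or> j \<in> Qrej M1 \<longrightarrow> v j = 0"
    and HN: "Qacc M1 \<subseteq> {..<N}"
    and rel: "\<forall>i<N. mv N (hh v) \<chi> i = \<phi> i"
  shows "ainc (conjM M1 s v) \<chi> \<sigma> = ainc M1 \<phi> \<sigma>"
    and "\<forall>i<N. mv N (hh v) (nxt (conjM M1 s v) \<chi> \<sigma>) i = nxt M1 \<phi> \<sigma> i"
proof -
  define W where "W = hh v"
  define ip where "ip y = (\<Sum>j<N. cnj (v j) * y j)" for y
  define y where "y = mv N (umat M1 \<sigma>) \<phi>"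
  have Wapp: "mv N W x i = x i - v i * ip x" if "i < N" for x i
    using mv_hh[OF that] by (simp add: W_def ip_def)
  have "mv N (umat M1 \<sigma>) (mv N W \<chi>) = y"
    unfolding y_def by (rule mv_cong) (use rel W_def in simp)
  then have chi': "mv N (umat (conjM M1 s v) \<sigma>) \<chi> = mv N W y"
    by (simp add: mv_mmul N[symmetric] W_def)
  have chi'i: "mv N (umat (conjM M1 s v) \<sigma>) \<chi> i = y i - v i * ip y" if "i < N" for i
    using chi' Wapp[OF that] by simp
  show "ainc (conjM M1 s v) \<chi> \<sigma> = ainc M1 \<phi> \<sigma>"
    unfolding ainc_def
  proof (rule sum.cong)
    fix q assume q: "q \<in> Qacc M1"
    then have "q < N" "v q = 0" using HN vH by auto
    then show "(cmod (mv (dim (conjM M1 s v)) (umat (conjM M1 s v) \<sigma>) \<chi> q))\<^sup>2 = (cmod (mv (dim M1) (umat M1 \<sigma>) \<phi> q))\<^sup>2"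
      using chi'i by (simp add: N[symmetric] y_def)
  qed simp
  define mk where "mk = nxt (conjM M1 s v) \<chi> \<sigma>"
  have mk: "mk i = (if i < N \<and> i \<notin> Qacc M1 \<and> i \<notin> Qrej M1 then y i - v i * ip y else 0)" for i
    using chi'i by (simp add: mk_def nxt_def N[symmetric])
  have ipmk: "ip mk = ip y - 2 * ip y"
  proof -
    have "ip mk = (\<Sum>j<N. cnj (v j) * y j - (cnj (v j) * v j) * ip y)"
      unfolding ip_def[of mk]
    proof (rule sum.cong[OF refl])
      fix j assume "j \<in> {..<N}"
      then show "cnj (v j) * mk j = cnj (v j) * y j - cnj (v j) * v j * ip y"
        using vH by (cases "j \<in> Qacc M1 \<or> j \<in> Qrej M1") (auto simp: mk algebra_simps)
    qed
    also have "\<dots> = ip y - 2 * ip y"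
      by (simp add: sum_subtractf ip_def S2 flip: sum_distrib_right)
    finally show ?thesis .
  qed
  show "\<forall>i<N. mv N (hh v) (nxt (conjM M1 s v) \<chi> \<sigma>) i = nxt M1 \<phi> \<sigma> i"
  proof (intro allI impI)
    fix i assume i: "i < N"
    have "mv N (hh v) (nxt (conjM M1 s v) \<chi> \<sigma>) i = mk i - v i * ip mk"
      using Wapp[OF i] by (simp add: mk_def W_def)
    also have "\<dots> = nxt M1 \<phi> \<sigma> i"
      using i vH by (cases "i \<in> Qacc M1 \<or> i \<in> Qrej M1") (auto simp: mk ipmk nxt_def N[symmetric] y_def algebra_simps)
    finally show "mv N (hh v) (nxt (conjM M1 s v) \<chi> \<sigma>) i = nxt M1 \<phi> \<sigma> i" .
  qed
qed

lemma conj_run: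
  assumes N: "N = dim M1" and S2: "(\<Sum>k<N. cnj (v k) * v k) = 2"
    and vH: "\<forall>j. j \<in> Qacc M1 \<or> j \<in> Qrej M1 \<longrightarrow> v j = 0"
    and HN: "Qacc M1 \<subseteq> {..<N}"
    and rel: "\<forall>i<N. mv N (hh v) \<chi> i = \<phi> i"
  shows "runacc (conjM M1 s v) \<chi> xs = runacc M1 \<phi> xs"
  using rel
proof (induction xs arbitrary: \<chi> \<phi>)
  case Nil then show ?case by simp
next
  case (Cons \<sigma> xs)
  note cs = conj_step[OF N S2 vH HN Cons.prems, of s \<sigma>]
  show ?case using cs Cons.IH[OF cs(2)] by simp
qed


lemma Hs_flip: "Hs (flipM M) = Hs M" by (auto simp: Hs_def)

lemma flip_ainc: "ainc (flipM M) \<psi> \<sigma> = rinc M \<psi> \<sigma>" by (simp add: ainc_def rinc_def)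

lemma runacc_single: "runacc M \<psi> [\<sigma>] = ainc M \<psi> \<sigma>" by simp

lemma compl_prob:
  assumes wf: "wf_mmqfa M"
  shows "acc_prob (multi (flipM M) 1 (\<lambda>\<sigma>. [\<sigma>]) (\<lambda>\<sigma>. \<sigma> = None)) x = 1 - acc_prob M x"
proof -
  define F where "F = flipM M"
  define M' where "M' = multi F 1 (\<lambda>\<sigma>. [\<sigma>]) (\<lambda>\<sigma>. \<sigma> = None)"
  define n where "n = dim M"
  define e where "e = e0 (init M)"
  define xs where "xs = map Some x"
  have wfF: "wf_mmqfa F" using wf by (simp add: F_def flip_wf)
  have nF: "n = dim F" by (simp add: F_def n_def)
  have initn: "init M < n" using wf by (simp add: wf_mmqfa_def n_def)
  have R0: "Rc n 1 0 e e" using Rc_init[OF initn] by (simp add: e_def)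
  have sim: "runacc M' e xs = runacc F e (concat (map (\<lambda>\<sigma>. [\<sigma>]) xs))
     \<and> Rc n 1 0 (runfin F e (concat (map (\<lambda>\<sigma>. [\<sigma>]) xs))) (runfin M' e xs)"
    unfolding M'_def by (rule multi_sim[OF wfF nF _ R0]) (auto simp: xs_def)
  define \<phi> where "\<phi> = runfin M e xs"
  have sim1: "runacc M' e xs = runrej M e xs" and R1: "Rc n 1 0 \<phi> (runfin M' e xs)"
    using sim by (simp_all add: concat_single F_def flip_runacc flip_runfin \<phi>_def)
  have st: "ainc M' (runfin M' e xs) None = runacc F \<phi> [None]
     + (if None = None then (\<Sum>i\<in>{i. i < n \<and> i \<notin> Hs F}. (cmod (runfin F \<phi> [None] i))\<^sup>2) else 0)"
    unfolding M'_def
    using multi_step(1)[where f="\<lambda>\<sigma>. [\<sigma>]" and D="\<lambda>\<sigma>. \<sigma> = None" and \<sigma>=None, OF wfF nF refl _ _ R1[unfolded M'_def]] by simp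
  define v where "v = runfin M \<phi> [None]"
  have vz: "v i = 0" if "i \<in> Hs M" for i using that by (auto simp: v_def nxt_def Hs_def)
  have "(\<Sum>i\<in>{i. i < n \<and> i \<notin> Hs M}. (cmod (v i))\<^sup>2) = (\<Sum>i<n. if i \<notin> Hs M then (cmod (v i))\<^sup>2 else 0)"
    by (simp add: sum_if_lt)
  also have "\<dots> = nrm n v" unfolding nrm_def by (rule sum.cong) (auto simp: vz)
  finally have nv: "(\<Sum>i\<in>{i. i < n \<and> i \<notin> Hs M}. (cmod (v i))\<^sup>2) = nrm n v" .
  have "acc_prob M' x = runacc M' e (xs @ [None])"
    by (simp add: acc_prob_eq M'_def multi_simps e_def xs_def F_def)
  also have "\<dots> = runrej M e xs + runrej M \<phi> [None] + nrm n v"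
    using sim1 st nv by (simp add: runacc_append F_def flip_runacc flip_runfin Hs_flip v_def flip_nxt flip_ainc)
  also have "\<dots> = runrej M e (xs @ [None]) + nrm n (runfin M e (xs @ [None]))"
    by (simp add: runrej_append runfin_append \<phi>_def v_def)
  also have "\<dots> = 1 - runacc M e (xs @ [None])"
    using run_cons[OF wf, of e "xs @ [None]"] nrm_e0[OF initn] by (simp add: e_def n_def)
  also have "\<dots> = 1 - acc_prob M x" by (simp add: acc_prob_eq e_def xs_def)
  finally show ?thesis by (simp add: M'_def F_def)
qed

lemma hom_concat:
  assumes "monoid_hom h"
  shows "concat (map (\<lambda>a. h [a]) x) = h x"
proof (induction x)
  case Nil then show ?case using assms by (simp add: monoid_hom_def)
next
  case (Cons a x)
  have "h (a # x) = h ([a] @ x)" by simp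
  also have "\<dots> = h [a] @ h x" using assms by (simp only: monoid_hom_def)
  finally show ?case using Cons by simp
qed

lemma sim_prob:
  assumes wf: "wf_mmqfa M"
    and fl: "\<forall>\<sigma>. length (f \<sigma>) \<le> K"
  shows "acc_prob (multi M K f (\<lambda>_. False)) x = runacc M (e0 (init M)) (concat (map f (map Some x @ [None])))"
proof -
  have initn: "init M < dim M" using wf by (simp add: wf_mmqfa_def)
  have "runacc (multi M K f (\<lambda>_. False)) (e0 (init M)) (map Some x @ [None])
      = runacc M (e0 (init M)) (concat (map f (map Some x @ [None])))"
    using multi_sim[OF wf refl _ Rc_init[OF initn], of "map Some x @ [None]" "\<lambda>_. False" f K] fl by simp
  then show ?thesis by (simp add: acc_prob_eq multi_simps)
qed


lemma lq_prob:
  assumes wf: "wf_mmqfa (M :: 'a mmqfa)"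
  shows "\<exists>M'' :: 'a mmqfa. wf_mmqfa M'' \<and>
           (\<forall>x. acc_prob M'' x = acc_prob M (w @ x) - runacc M (e0 (init M)) (map Some w))"
proof -
  define n where "n = dim M"
  define N where "N = n * (1 + 2) + 2"
  define s where "s = n * (1 + 2)"
  define g where "g = n * (1 + 2) + 1"
  define M1 where "M1 = multi M 1 (\<lambda>\<sigma>. [\<sigma>]) (\<lambda>_. False)"
  define e where "e = e0 (init M)"
  define \<psi>w where "\<psi>w = runfin M e (map Some w)"
  define a where "a = runacc M e (map Some w)"
  define nw where "nw = nrm n \<psi>w"
  define \<beta> where "\<beta> = sqrt (1 - nw)"
  define u where "u j = (if j < n then \<psi>w j else if j = g then complex_of_real \<beta> else 0)" for j
  define v where "v j = (if j = s then 1 else 0) - u j" for j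
  have initn: "init M < n" using wf by (simp add: wf_mmqfa_def n_def)
  have n0: "0 < n" using initn by simp
  have cons: "a + runrej M e (map Some w) + nw = 1"
    using run_cons[OF wf, of e "map Some w"] nrm_e0[OF initn]
    by (simp add: a_def nw_def \<psi>w_def e_def n_def)
  have nw1: "nw \<le> 1" using cons runacc_nonneg[of M e "map Some w"] runrej_nonneg[of M e "map Some w"]
    by (simp add: a_def)
  have b2: "\<beta>\<^sup>2 = 1 - nw" using nw1 by (simp add: \<beta>_def)
  have wf1: "wf_mmqfa M1" unfolding M1_def by (rule wf_multi[OF wf]) simp
  have dim1: "dim M1 = N" by (simp add: M1_def multi_simps N_def n_def)
  have sN: "s < N" "g < N" "n \<le> s" "s \<noteq> g" by (simp_all add: s_def N_def g_def)
  have us: "u s = 0" using sN by (simp add: u_def g_def s_def)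
  have vs: "v s = 1" using us by (simp add: v_def)
  have S2: "(\<Sum>k<N. cnj (v k) * v k) = 2"
  proof -
    have t: "cnj (v k) * v k = complex_of_real ((if k < n then (cmod (\<psi>w k))\<^sup>2 else 0)
        + (if k = s then 1 else 0) + (if k = g then \<beta>\<^sup>2 else 0))" for k
    proof -
      have sq: "cnj z * z = complex_of_real ((cmod z)\<^sup>2)" for z
        using complex_norm_square[of z] by (simp add: mult.commute)
      show ?thesis
      proof (cases "k < n")
        case True
        then have "k \<noteq> s" "k \<noteq> g" using sN by (auto simp: g_def s_def)
        then show ?thesis using True by (simp add: v_def u_def sq)
      next
        case False
        then show ?thesis using sN by (auto simp: v_def u_def sq power2_eq_square)
      qed
    qed
    have "(\<Sum>k<N. cnj (v k) * v k) = complex_of_real ((\<Sum>k<N. if k < n then (cmod (\<psi>w k))\<^sup>2 else 0)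
        + (\<Sum>k<N. if k = s then 1 else 0) + (\<Sum>k<N. if k = g then \<beta>\<^sup>2 else 0))"
      unfolding t of_real_sum[symmetric] by (simp only: sum.distrib)
    also have "(\<Sum>k<N. if k < n then (cmod (\<psi>w k))\<^sup>2 else 0) = nw"
      using sN by (simp add: sum_lt_restrict nw_def nrm_def)
    also have "(\<Sum>k<N. if k = s then (1::real) else 0) = 1" using sN by simp
    also have "(\<Sum>k<N. if k = g then \<beta>\<^sup>2 else 0) = 1 - nw" using sN b2 by simp
    finally show ?thesis by simp
  qed
  have vH: "\<forall>j. j \<in> Qacc M1 \<or> j \<in> Qrej M1 \<longrightarrow> v j = 0"
  proof (intro allI impI)
    fix j assume "j \<in> Qacc M1 \<or> j \<in> Qrej M1"
    then have "n \<le> j \<and> j < n * (1 + 2)" unfolding M1_def by (rule multi_halt_range[OF wf n_def])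
    then show "v j = 0" by (simp add: v_def u_def s_def g_def)
  qed
  have HN: "Qacc M1 \<subseteq> {..<N}" using wf1 dim1 by (simp add: wf_mmqfa_def)
  have rel: "\<forall>i<N. mv N (hh v) (e0 s) i = u i"
  proof (intro allI impI)
    fix i assume i: "i < N"
    have "(\<Sum>j<N. cnj (v j) * e0 s j) = cnj (v s)" using sN by (simp add: e0_def sum_delta2)
    then have "mv N (hh v) (e0 s) i = e0 s i - v i" using mv_hh[OF i, of v "e0 s"] vs by simp
    then show "mv N (hh v) (e0 s) i = u i" by (simp add: v_def e0_def)
  qed
  define M'' where "M'' = conjM M1 s v"
  have wf2: "wf_mmqfa M''" unfolding M''_def using wf_conjM[OF wf1] sN S2 dim1 by simp
  have Rcu: "Rc n 1 (complex_of_real \<beta>) \<psi>w u" by (simp add: Rc_def u_def g_def)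
  have "\<forall>x. acc_prob M'' x = acc_prob M (w @ x) - a"
  proof
    fix x
    have "acc_prob M'' x = runacc M'' (e0 s) (map Some x @ [None])"
      by (simp add: acc_prob_eq M''_def)
    also have "\<dots> = runacc M1 u (map Some x @ [None])"
      unfolding M''_def by (rule conj_run[OF dim1[symmetric] S2 vH HN rel])
    also have "\<dots> = runacc M \<psi>w (map Some x @ [None])"
      using multi_sim[OF wf n_def _ Rcu, of "map Some x @ [None]" "\<lambda>_. False" "\<lambda>\<sigma>. [\<sigma>]"]
      unfolding concat_single by (simp add: M1_def)
    also have "\<dots> = acc_prob M (w @ x) - a"
      by (simp add: acc_prob_eq runacc_append a_def \<psi>w_def e_def)
    finally show "acc_prob M'' x = acc_prob M (w @ x) - a" .
  qed
  then show ?thesis using wf2 by (auto simp: a_def e_def)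
qed


lemma RMM_I:
  assumes "wf_mmqfa M'" "\<epsilon>' \<ge> \<epsilon>" "accepts_with M' L' c' \<epsilon>'"
  shows "L' \<in> RMM \<epsilon>"
  using assms unfolding RMM_def by blast

theorem theorem4p1:
  fixes \<epsilon> :: real and L :: "('a::finite) list set"
  assumes "L \<in> RMM \<epsilon>"
  shows "UNIV - L \<in> RMM \<epsilon>
    \<and> (\<forall>h. monoid_hom h \<longrightarrow> {x. h x \<in> L} \<in> RMM \<epsilon>)
    \<and> (\<forall>w. {x. w @ x \<in> L} \<in> RMM \<epsilon>)
    \<and> (\<forall>w. {x. x @ w \<in> L} \<in> RMM \<epsilon>)"
proof -
  from assms obtain M :: "'a mmqfa" and c \<epsilon>' where wf: "wf_mmqfa M" and ee: "\<epsilon>' \<ge> \<epsilon>"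
    and acc: "accepts_with M L c \<epsilon>'"
    unfolding RMM_def by blast
  have ep: "\<epsilon>' > 0" and inL: "\<And>x. x \<in> L \<Longrightarrow> acc_prob M x > c + \<epsilon>'"
    and notL: "\<And>x. x \<notin> L \<Longrightarrow> acc_prob M x < c - \<epsilon>'"
    using acc by (auto simp: accepts_with_def)
  have P1: "UNIV - L \<in> RMM \<epsilon>"
  proof -
    define M' where "M' = multi (flipM M) 1 (\<lambda>\<sigma>. [\<sigma>]) (\<lambda>\<sigma>. \<sigma> = None)"
    have wf': "wf_mmqfa M'" unfolding M'_def by (rule wf_multi[OF flip_wf[OF wf]]) simp
    have "accepts_with M' (UNIV - L) (1 - c) \<epsilon>'"
      unfolding accepts_with_def M'_def compl_prob[OF wf] using ep inL notL by force
    then show ?thesis using wf' ee by (rule RMM_I[rotated 2])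
  qed
  have P2: "\<forall>h. monoid_hom h \<longrightarrow> {x. h x \<in> L} \<in> RMM \<epsilon>"
  proof (intro allI impI)
    fix h :: "'a list \<Rightarrow> 'a list" assume hom: "monoid_hom h"
    define K where "K = Max (range (\<lambda>a. length (h [a]))) + 1"
    define f where "f \<sigma> = (case \<sigma> of None \<Rightarrow> [None] | Some a \<Rightarrow> map Some (h [a]))" for \<sigma>
    have fl: "\<forall>\<sigma>. length (f \<sigma>) \<le> K"
    proof
      fix \<sigma> :: "'a option"
      show "length (f \<sigma>) \<le> K"
      proof (cases \<sigma>)
        case None then show ?thesis by (simp add: f_def K_def)
      next
        case (Some a)
        have "length (h [a]) \<le> Max (range (\<lambda>a. length (h [a])))" by (rule Max_ge) auto
        moreover have "length (f \<sigma>) = length (h [a])" using Some by (simp add: f_def)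
        ultimately show ?thesis unfolding K_def by linarith
      qed
    qed
    define M' where "M' = multi M K f (\<lambda>_. False)"
    have wf': "wf_mmqfa M'" unfolding M'_def by (rule wf_multi[OF wf]) (use fl in simp)
    have cf: "concat (map f (map Some x @ [None])) = map Some (h x) @ [None]" for x
    proof -
      have "concat (map f (map Some x)) = concat (map (\<lambda>a. map Some (h [a])) x)"
        by (simp add: f_def o_def)
      also have "\<dots> = map Some (concat (map (\<lambda>a. h [a]) x))" by (simp add: map_concat o_def)
      also have "\<dots> = map Some (h x)" using hom_concat[OF hom] by simp
      finally show ?thesis by (simp add: f_def)
    qed
    have pr: "acc_prob M' x = acc_prob M (h x)" for x
      unfolding M'_def sim_prob[OF wf fl] cf by (simp add: acc_prob_eq)
    have "accepts_with M' {x. h x \<in> L} c \<epsilon>'"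
      unfolding accepts_with_def pr using ep inL notL by simp
    then show "{x. h x \<in> L} \<in> RMM \<epsilon>" using wf' ee by (rule RMM_I[rotated 2])
  qed
  have P3: "\<forall>w. {x. w @ x \<in> L} \<in> RMM \<epsilon>"
  proof
    fix w :: "'a list"
    obtain M'' :: "'a mmqfa" where wf': "wf_mmqfa M''"
      and pr: "\<forall>x. acc_prob M'' x = acc_prob M (w @ x) - runacc M (e0 (init M)) (map Some w)"
      using lq_prob[OF wf, of w] by blast
    define a where "a = runacc M (e0 (init M)) (map Some w)"
    have "accepts_with M'' {x. w @ x \<in> L} (c - a) \<epsilon>'"
      unfolding accepts_with_def using pr ep inL notL by (auto simp: a_def)
    then show "{x. w @ x \<in> L} \<in> RMM \<epsilon>" using wf' ee by (rule RMM_I[rotated 2])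
  qed
  have P4: "\<forall>w. {x. x @ w \<in> L} \<in> RMM \<epsilon>"
  proof
    fix w :: "'a list"
    define K where "K = length w + 1"
    define f where "f \<sigma> = (case \<sigma> of None \<Rightarrow> map Some w @ [None] | Some a \<Rightarrow> [Some a])" for \<sigma>
    have fl: "\<forall>\<sigma>. length (f \<sigma>) \<le> K"
    proof
      fix \<sigma> :: "'a option"
      show "length (f \<sigma>) \<le> K" by (cases \<sigma>) (simp_all add: f_def K_def)
    qed
    define M' where "M' = multi M K f (\<lambda>_. False)"
    have wf': "wf_mmqfa M'" unfolding M'_def by (rule wf_multi[OF wf]) (use fl in simp)
    have cf: "concat (map f (map Some x @ [None])) = map Some (x @ w) @ [None]" for x
    proof -
      have "concat (map f (map Some x)) = map Some x" by (induction x) (simp_all add: f_def)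
      then show ?thesis by (simp add: f_def)
    qed
    have pr: "acc_prob M' x = acc_prob M (x @ w)" for x
      unfolding M'_def sim_prob[OF wf fl] cf by (simp add: acc_prob_eq)
    have "accepts_with M' {x. x @ w \<in> L} c \<epsilon>'"
      unfolding accepts_with_def pr using ep inL notL by simp
    then show "{x. x @ w \<in> L} \<in> RMM \<epsilon>" using wf' ee by (rule RMM_I[rotated 2])
  qed
  show ?thesis using P1 P2 P3 P4 by blast
qed

end
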